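(* Let $n\geq 1$ and $m\geq 1$ be integers. Then \[\frac{1}{n!}\sum_{\pi\in S_n}|{\bf B}^{-1}({\bf B}(\pi))|^m=\prod_{j=1}^{n-1}\frac{2^{m+1}+n-j-1}{n-j+1}.\]
   Context: $S_n$ is the set of permutations of $\{1,\dots,n\}$ written as words $\pi_1\cdots\pi_n$. For $i\in\{1,\dots,n-1\}$, $t_i(\pi)$ swaps $\pi_i$ and $\pi_{i+1}$ if $\pi_i>\pi_{i+1}$ and leaves $\pi$ unchanged otherwise. The bubble sort map is ${\bf B}=t_{n-1}\circ\cdots\circ t_1:S_n\to S_n$, and ${\bf B}^{-1}(\sigma)=\{\tau\in S_n:{\bf B}(\tau)=\sigma\}$. *)

theory Defs
  imports Main "HOL-Combinatorics.Multiset_Permutations"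
begin

text \<open>List positions are 0-based, so the
  paper's t_i (for 1 <= i <= n-1) is swap_step (i-1) below.\<close>

definition swap_step :: "nat \<Rightarrow> nat list \<Rightarrow> nat list" where
  "swap_step i w =
     (if w ! i > w ! (Suc i) then w[i := w ! Suc i, Suc i := w ! i] else w)"

text \<open>Bubble sort map B = t_{n-1} o ... o t_1 : t_1 is applied first.\<close>
definition bubble :: "nat list \<Rightarrow> nat list" where
  "bubble w = foldl (\<lambda>v i. swap_step i v) w [0..<length w - 1]"

definition bubble_preimage :: "nat \<Rightarrow> nat list \<Rightarrow> nat list set" where
  "bubble_preimage n s = {t \<in> permutations_of_set {1..n}. bubble t = s}"

end

theory Submission
  imports Defs
begin

fun bpc :: "nat \<Rightarrow> nat list \<Rightarrow> nat list" where
  "bpc c [] = [c]"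
| "bpc c (b # w) = (if c > b then b # bpc c w else c # bpc b w)"

fun bp :: "nat list \<Rightarrow> nat list" where
  "bp [] = []"
| "bp (a # w) = bpc a w"

lemma swap_step_Suc: "swap_step (Suc i) (x # u) = x # swap_step i u"
  by (simp add: swap_step_def)

lemma foldl_shift:
  "foldl (\<lambda>v i. swap_step i v) (x # v) (map Suc is) = x # foldl (\<lambda>v i. swap_step i v) v is"
  by (induction "is" arbitrary: v) (simp_all add: swap_step_Suc)

lemma foldl_bpc: "foldl (\<lambda>v i. swap_step i v) (c # w) [0..<length w] = bpc c w"
proof (induction w arbitrary: c)
  case Nil then show ?case by simp
next
  case (Cons b w)
  have u: "[0..<Suc (length w)] = 0 # map Suc [0..<length w]"
    by (simp add: upt_conv_Cons map_Suc_upt del: upt_Suc)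
  show ?case
  proof (cases "c > b")
    case True
    then have "swap_step 0 (c # b # w) = b # c # w" by (simp add: swap_step_def)
    then show ?thesis using True Cons by (simp add: u foldl_shift del: upt_Suc)
  next
    case False
    then have "swap_step 0 (c # b # w) = c # b # w" by (simp add: swap_step_def)
    then show ?thesis using False Cons by (simp add: u foldl_shift del: upt_Suc)
  qed
qed

lemma bubble_bp: "bubble w = bp w"
  by (cases w) (simp_all add: bubble_def foldl_bpc)

lemma mset_bpc: "mset (bpc c w) = mset (c # w)"
  by (induction w arbitrary: c) auto

lemma mset_bp: "mset (bp w) = mset w"
  by (cases w) (simp_all add: mset_bpc)

lemma set_bp: "set (bp w) = set w"
  by (metis mset_bp set_mset_mset)

lemma length_bp: "length (bp w) = length w"
  by (metis mset_bp size_mset)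

lemma distinct_bp: "distinct (bp w) = distinct w"
  by (rule mset_eq_imp_distinct_iff[OF mset_bp])

lemma last_bpc: "x \<in> set (c # w) \<Longrightarrow> x \<le> last (bpc c w)"
proof (induction w arbitrary: c x)
  case Nil then show ?case by simp
next
  case (Cons b w)
  show ?case
  proof (cases "c > b")
    case True
    then have "last (bpc c (b # w)) = last (bpc c w)" by (cases w) auto
    moreover have "x \<in> set (c # w) \<or> x = b" using Cons.prems by auto
    moreover have "c \<le> last (bpc c w)" by (rule Cons.IH) simp
    moreover have "x \<in> set (c # w) \<Longrightarrow> x \<le> last (bpc c w)" using Cons.IH by blast
    ultimately show ?thesis using True by (metis less_imp_le_nat order_trans)
  next
    case False
    then have "last (bpc c (b # w)) = last (bpc b w)" by (cases w) auto
    moreover have "x \<in> set (b # w) \<or> x = c" using Cons.prems by auto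
    moreover have "b \<le> last (bpc b w)" by (rule Cons.IH) simp
    moreover have "x \<in> set (b # w) \<Longrightarrow> x \<le> last (bpc b w)" using Cons.IH by blast
    ultimately show ?thesis using False by (metis not_less order_trans)
  qed
qed

lemma bpc_big: "\<forall>x\<in>set b. x < M \<Longrightarrow> bpc M b = b @ [M]"
  by (induction b) auto

lemma bpc_split: "c < M \<Longrightarrow> \<forall>x\<in>set a. x < M \<Longrightarrow> \<forall>x\<in>set b. x < M \<Longrightarrow>
   bpc c (a @ M # b) = bpc c a @ b @ [M]"
  by (induction a arbitrary: c) (auto simp: bpc_big)

lemma bp_split: "\<forall>x\<in>set a. x < M \<Longrightarrow> \<forall>x\<in>set b. x < M \<Longrightarrow>
   bp (a @ M # b) = bp a @ b @ [M]"
  by (cases a) (auto simp: bpc_big bpc_split)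

definition Q :: "nat list \<Rightarrow> nat" where "Q s = card {t. bp t = s}"

definition S :: "nat list \<Rightarrow> nat" where "S g = (\<Sum>k\<le>length g. Q (take k g))"

lemma finite_pre: "finite {t. bp t = s}"
proof (rule finite_subset)
  show "{t. bp t = s} \<subseteq> {xs. set xs \<subseteq> set s \<and> length xs = length s}"
    using set_bp length_bp by auto
  show "finite {xs. set xs \<subseteq> set s \<and> length xs = length s}"
    by (rule finite_lists_length_eq) simp
qed

lemma Q_Nil: "Q [] = 1"
proof -
  have "bp t = [] \<longleftrightarrow> t = []" for t by (metis bp.simps(1) length_0_conv length_bp)
  then have "{t. bp t = []} = {[]}" by auto
  then show ?thesis by (simp add: Q_def)
qed

lemma pre_snoc_max:
  assumes d: "distinct (g @ [M])" and lt: "\<forall>x\<in>set g. x < M"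
  shows "{t. bp t = g @ [M]} = (\<Union>k\<in>{..length g}. (\<lambda>a. a @ M # drop k g) ` {a. bp a = take k g})"
proof
  show "{t. bp t = g @ [M]} \<subseteq> (\<Union>k\<in>{..length g}. (\<lambda>a. a @ M # drop k g) ` {a. bp a = take k g})"
  proof
    fix t assume "t \<in> {t. bp t = g @ [M]}"
    then have bt: "bp t = g @ [M]" by simp
    have dt: "distinct t" using d bt distinct_bp[of t] by simp
    have st: "set t = insert M (set g)" using bt set_bp[of t] by simp
    then have "M \<in> set t" by simp
    then obtain a b where t: "t = a @ M # b" by (meson split_list)
    have "M \<notin> set a" "M \<notin> set b" using dt t by auto
    then have la: "\<forall>x\<in>set a. x < M" and lb: "\<forall>x\<in>set b. x < M" using st t lt by auto
    have "bp a @ b @ [M] = g @ [M]" using bp_split[OF la lb] bt t by simp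
    then have e: "bp a @ b = g" by simp
    define k where "k = length a"
    have "length (bp a) = k" by (simp add: k_def length_bp)
    then have "k \<le> length g" "take k g = bp a" "drop k g = b" using e by auto
    then have "t \<in> (\<lambda>a. a @ M # drop k g) ` {a. bp a = take k g}" using t by auto
    then show "t \<in> (\<Union>k\<in>{..length g}. (\<lambda>a. a @ M # drop k g) ` {a. bp a = take k g})"
      using \<open>k \<le> length g\<close> by blast
  qed
next
  show "(\<Union>k\<in>{..length g}. (\<lambda>a. a @ M # drop k g) ` {a. bp a = take k g}) \<subseteq> {t. bp t = g @ [M]}"
  proof
    fix t assume "t \<in> (\<Union>k\<in>{..length g}. (\<lambda>a. a @ M # drop k g) ` {a. bp a = take k g})"
    then obtain k a where k: "k \<le> length g" and a: "bp a = take k g" and t: "t = a @ M # drop k g" by auto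
    have "set a = set (take k g)" using a set_bp[of a] by simp
    then have la: "\<forall>x\<in>set a. x < M" using lt by (auto dest: in_set_takeD)
    have lb: "\<forall>x\<in>set (drop k g). x < M" using lt by (meson in_set_dropD)
    show "t \<in> {t. bp t = g @ [M]}" using bp_split[OF la lb] a t by simp
  qed
qed

lemma Q_snoc_max:
  assumes d: "distinct (g @ [M])" and lt: "\<forall>x\<in>set g. x < M"
  shows "Q (g @ [M]) = S g"
proof -
  have "Q (g @ [M]) = card (\<Union>k\<in>{..length g}. (\<lambda>a. a @ M # drop k g) ` {a. bp a = take k g})"
    by (simp add: Q_def pre_snoc_max[OF d lt])
  also have "\<dots> = (\<Sum>k\<le>length g. card ((\<lambda>a. a @ M # drop k g) ` {a. bp a = take k g}))"
  proof (rule card_UN_disjoint)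
    show "finite {..length g}" by simp
    show "\<forall>i\<in>{..length g}. finite ((\<lambda>a. a @ M # drop i g) ` {a. bp a = take i g})"
      using finite_pre by simp
    show "\<forall>i\<in>{..length g}. \<forall>j\<in>{..length g}. i \<noteq> j \<longrightarrow>
      (\<lambda>a. a @ M # drop i g) ` {a. bp a = take i g} \<inter> (\<lambda>a. a @ M # drop j g) ` {a. bp a = take j g} = {}"
    proof (intro ballI impI)
      fix i j assume i: "i \<in> {..length g}" and j: "j \<in> {..length g}" and ij: "i \<noteq> j"
      show "(\<lambda>a. a @ M # drop i g) ` {a. bp a = take i g} \<inter> (\<lambda>a. a @ M # drop j g) ` {a. bp a = take j g} = {}"
      proof (rule ccontr)
        assume "\<not> ?thesis"
        then obtain a a' where a: "bp a = take i g" and a': "bp a' = take j g"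
          and e: "a @ M # drop i g = a' @ M # drop j g" by blast
        have "set a = set (take i g)" using a set_bp[of a] by simp
        then have "M \<notin> set a" using lt by (auto dest: in_set_takeD)
        moreover have "M \<notin> set (drop i g)" using lt by (auto dest: in_set_dropD)
        ultimately have "a = a'" using e append_Cons_eq_iff[of M a "drop i g" a' "drop j g"] by blast
        moreover have "length a = i" using a i length_bp[of a] by simp
        moreover have "length a' = j" using a' j length_bp[of a'] by simp
        ultimately show False using ij by simp
      qed
    qed
  qed
  also have "\<dots> = (\<Sum>k\<le>length g. Q (take k g))"
  proof (rule sum.cong)
    fix k
    have "inj_on (\<lambda>a. a @ M # drop k g) {a. bp a = take k g}" by (rule inj_onI) simp
    then show "card ((\<lambda>a. a @ M # drop k g) ` {a. bp a = take k g}) = Q (take k g)"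
      by (simp add: Q_def card_image)
  qed simp
  finally show ?thesis by (simp add: S_def)
qed

lemma Q_snoc_nonmax:
  assumes d: "distinct (g @ [x])" and nlt: "\<not> (\<forall>y\<in>set g. y < x)"
  shows "Q (g @ [x]) = 0"
proof -
  have "{t. bp t = g @ [x]} = {}"
  proof (rule ccontr)
    assume "\<not> ?thesis"
    then obtain t where bt: "bp t = g @ [x]" by auto
    then have "t \<noteq> []" by auto
    then obtain c w where t: "t = c # w" by (cases t) auto
    have "\<forall>y\<in>set t. y \<le> x" using last_bpc[of _ c w] bt t by auto
    moreover have "set t = set (g @ [x])" using bt set_bp by metis
    ultimately have "\<forall>y\<in>set g. y \<le> x" by auto
    moreover have "x \<notin> set g" using d by simp
    ultimately have "\<forall>y\<in>set g. y < x" by (metis le_neq_implies_less)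
    then show False using nlt by blast
  qed
  then show ?thesis by (simp add: Q_def)
qed

lemma S_snoc:
  assumes d: "distinct (g @ [x])"
  shows "S (g @ [x]) = (if \<forall>y\<in>set g. y < x then 2 else 1) * S g"
proof -
  have "S (g @ [x]) = (\<Sum>k\<le>length g. Q (take k (g @ [x]))) + Q (g @ [x])"
    by (simp add: S_def)
  also have "(\<Sum>k\<le>length g. Q (take k (g @ [x]))) = S g"
    unfolding S_def by (rule sum.cong) auto
  finally show ?thesis using Q_snoc_max[OF d] Q_snoc_nonmax[OF d] by auto
qed

lemma S_pos: "S g \<ge> 1"
proof -
  have "Q (take 0 g) \<le> S g" unfolding S_def by (rule member_le_sum) auto
  then show ?thesis by (simp add: Q_Nil)
qed

lemma perms_snoc:
  assumes "A \<noteq> {}"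
  shows "permutations_of_set A = (\<Union>g\<in>A. (\<lambda>\<gamma>. \<gamma> @ [g]) ` permutations_of_set (A - {g}))"
proof
  show "permutations_of_set A \<subseteq> (\<Union>g\<in>A. (\<lambda>\<gamma>. \<gamma> @ [g]) ` permutations_of_set (A - {g}))"
  proof
    fix xs assume xs: "xs \<in> permutations_of_set A"
    then have sx: "set xs = A" and dx: "distinct xs" by (auto simp: permutations_of_set_def)
    then have "xs \<noteq> []" using assms by auto
    then obtain ys y where e: "xs = ys @ [y]" by (metis rev_exhaust)
    have "ys \<in> permutations_of_set (A - {y})" "y \<in> A"
      using sx dx e by (auto simp: permutations_of_set_def)
    then show "xs \<in> (\<Union>g\<in>A. (\<lambda>\<gamma>. \<gamma> @ [g]) ` permutations_of_set (A - {g}))"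
      using e by blast
  qed
next
  show "(\<Union>g\<in>A. (\<lambda>\<gamma>. \<gamma> @ [g]) ` permutations_of_set (A - {g})) \<subseteq> permutations_of_set A"
  proof
    fix xs assume "xs \<in> (\<Union>g\<in>A. (\<lambda>\<gamma>. \<gamma> @ [g]) ` permutations_of_set (A - {g}))"
    then obtain g \<gamma> where g: "g \<in> A" and p: "\<gamma> \<in> permutations_of_set (A - {g})" and x: "xs = \<gamma> @ [g]"
      by blast
    from p have s: "set \<gamma> = A - {g}" and d: "distinct \<gamma>" by (simp_all add: permutations_of_set_def)
    have "set xs = A" using s g x by auto
    moreover have "distinct xs" using s d x by simp
    ultimately show "xs \<in> permutations_of_set A" by (simp add: permutations_of_set_def)
  qed
qed

lemma gen_fun:
  fixes k :: nat
  shows "finite A \<Longrightarrow> (\<Sum>\<gamma>\<in>permutations_of_set A. real (S \<gamma>) ^ k)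
     = (\<Prod>i=1..card A. 2 ^ k + real i - 1)"
proof (induction "card A" arbitrary: A)
  case 0
  then have "A = {}" by simp
  then show ?case by (simp add: S_def Q_Nil)
next
  case (Suc c A)
  then have ne: "A \<noteq> {}" by auto
  define M where "M = Max A"
  have MA: "M \<in> A" using Suc.prems ne by (simp add: M_def)
  define F where "F = (\<Prod>i=1..c. 2 ^ k + real i - 1)"
  have inner: "(\<Sum>\<gamma>\<in>permutations_of_set (A - {g}). real (S (\<gamma> @ [g])) ^ k)
      = (if g = M then 2 ^ k else 1) * F" if g: "g \<in> A" for g
  proof -
    have cA: "card (A - {g}) = c" using Suc.hyps(2) g Suc.prems by simp
    have "(\<Sum>\<gamma>\<in>permutations_of_set (A - {g}). real (S (\<gamma> @ [g])) ^ k)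
       = (\<Sum>\<gamma>\<in>permutations_of_set (A - {g}). (if g = M then 2 ^ k else 1) * real (S \<gamma>) ^ k)"
    proof (rule sum.cong)
      fix \<gamma> assume "\<gamma> \<in> permutations_of_set (A - {g})"
      then have sg: "set \<gamma> = A - {g}" and dg: "distinct \<gamma>" by (auto simp: permutations_of_set_def)
      then have d: "distinct (\<gamma> @ [g])" by auto
      have iff: "(\<forall>y\<in>set \<gamma>. y < g) \<longleftrightarrow> g = M"
      proof
        assume "\<forall>y\<in>set \<gamma>. y < g"
        then have "\<forall>y\<in>A. y \<le> g" using sg by (metis DiffI less_imp_le_nat order_refl singletonD)
        then show "g = M" unfolding M_def using Suc.prems g by (intro Max_eqI[symmetric]) auto
      next
        assume "g = M"
        show "\<forall>y\<in>set \<gamma>. y < g"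
        proof
          fix y assume "y \<in> set \<gamma>"
          then have "y \<in> A" "y \<noteq> g" using sg by auto
          moreover have "y \<le> M" unfolding M_def using Max_ge[OF Suc.prems \<open>y \<in> A\<close>] .
          ultimately show "y < g" using \<open>g = M\<close> by simp
        qed
      qed
      show "real (S (\<gamma> @ [g])) ^ k = (if g = M then 2 ^ k else 1) * real (S \<gamma>) ^ k"
        using S_snoc[OF d] iff by (simp add: power_mult_distrib)
    qed simp
    also have "\<dots> = (if g = M then 2 ^ k else 1) * (\<Sum>\<gamma>\<in>permutations_of_set (A - {g}). real (S \<gamma>) ^ k)"
      by (rule sum_distrib_left[symmetric])
    also have "(\<Sum>\<gamma>\<in>permutations_of_set (A - {g}). real (S \<gamma>) ^ k) = F"
      unfolding F_def using Suc.hyps(1)[of "A - {g}"] cA Suc.prems by simp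
    finally show ?thesis .
  qed
  have "(\<Sum>\<gamma>\<in>permutations_of_set A. real (S \<gamma>) ^ k)
      = (\<Sum>g\<in>A. \<Sum>\<gamma>\<in>(\<lambda>\<gamma>. \<gamma> @ [g]) ` permutations_of_set (A - {g}). real (S \<gamma>) ^ k)"
    unfolding perms_snoc[OF ne]
  proof (rule sum.UNION_disjoint)
    show "finite A" by fact
    show "\<forall>i\<in>A. finite ((\<lambda>\<gamma>. \<gamma> @ [i]) ` permutations_of_set (A - {i}))" by simp
    show "\<forall>i\<in>A. \<forall>j\<in>A. i \<noteq> j \<longrightarrow> (\<lambda>\<gamma>. \<gamma> @ [i]) ` permutations_of_set (A - {i}) \<inter>
        (\<lambda>\<gamma>. \<gamma> @ [j]) ` permutations_of_set (A - {j}) = {}" by (auto simp: append_eq_append_conv)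
  qed
  also have "\<dots> = (\<Sum>g\<in>A. \<Sum>\<gamma>\<in>permutations_of_set (A - {g}). real (S (\<gamma> @ [g])) ^ k)"
  proof (rule sum.cong)
    fix g
    have "inj_on (\<lambda>\<gamma>. \<gamma> @ [g]) (permutations_of_set (A - {g}))" by (rule inj_onI) simp
    then show "(\<Sum>\<gamma>\<in>(\<lambda>\<gamma>. \<gamma> @ [g]) ` permutations_of_set (A - {g}). real (S \<gamma>) ^ k)
        = (\<Sum>\<gamma>\<in>permutations_of_set (A - {g}). real (S (\<gamma> @ [g])) ^ k)"
      by (simp add: sum.reindex)
  qed simp
  also have "\<dots> = (\<Sum>g\<in>A. (if g = M then 2 ^ k else 1) * F)"
    by (rule sum.cong[OF refl]) (rule inner)
  also have "\<dots> = (2 ^ k + real c) * F"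
  proof -
    have "(\<Sum>g\<in>A. (if g = M then 2 ^ k else 1) * F) = (if M = M then 2 ^ k else 1) * F + (\<Sum>g\<in>A - {M}. (if g = M then 2 ^ k else 1) * F)"
      by (rule sum.remove[OF Suc.prems MA])
    also have "(\<Sum>g\<in>A - {M}. (if g = M then 2 ^ k else 1) * F) = (\<Sum>g\<in>A - {M}. F)"
      by (rule sum.cong) auto
    also have "\<dots> = real c * F"
    proof -
      have "card (A - {M}) = c" using Suc.hyps(2) Suc.prems MA by simp
      then show ?thesis by simp
    qed
    finally show ?thesis by (simp add: algebra_simps)
  qed
  also have "\<dots> = (\<Prod>i=1..Suc c. 2 ^ k + real i - 1)"
  proof -
    have "(\<Prod>i=1..Suc c. (2::real) ^ k + real i - 1) = F * (2 ^ k + real c)"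
      by (simp add: F_def)
    then show ?thesis by (simp only: mult.commute)
  qed
  also have "\<dots> = (\<Prod>i=1..card A. 2 ^ k + real i - 1)"
    using Suc.hyps(2) by simp
  finally show ?case .
qed

lemma prod_fact: "(\<Prod>i=1..k. real i + 1) = fact (Suc k)"
  by (induction k) (simp_all add: algebra_simps)

lemma rhs_eq:
  fixes x :: real
  assumes "n \<ge> 1"
  shows "(\<Prod>j=1..n-1. (x + real n - real j - 1) / (real n - real j + 1))
       = (\<Prod>i=1..n-1. x + real i - 1) / fact n"
proof -
  have "(\<Prod>j=1..n-1. (x + real n - real j - 1) / (real n - real j + 1))
      = (\<Prod>i=1..n-1. (x + real i - 1) / (real i + 1))"
    by (rule prod.reindex_bij_witness[of _ "\<lambda>i. n - i" "\<lambda>i. n - i"]) (auto simp: of_nat_diff)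
  also have "\<dots> = (\<Prod>i=1..n-1. x + real i - 1) / (\<Prod>i=1..n-1. real i + 1)"
    by (rule prod_dividef)
  also have "(\<Prod>i=1..n-1. real i + 1) = fact n"
    using prod_fact[of "n-1"] assms by simp
  finally show ?thesis .
qed

lemma image_bp:
  assumes n: "n \<ge> 1"
  shows "bp ` permutations_of_set {1..n} = (\<lambda>\<gamma>. \<gamma> @ [n]) ` permutations_of_set {1..n-1}"
proof
  show "bp ` permutations_of_set {1..n} \<subseteq> (\<lambda>\<gamma>. \<gamma> @ [n]) ` permutations_of_set {1..n-1}"
  proof
    fix s assume "s \<in> bp ` permutations_of_set {1..n}"
    then obtain p where p: "p \<in> permutations_of_set {1..n}" and s: "s = bp p" by blast
    from p have sp: "set p = {1..n}" and dp: "distinct p" by (simp_all add: permutations_of_set_def)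
    have ss: "set s = {1..n}" using sp s set_bp by simp
    have ds: "distinct s" using dp s distinct_bp by simp
    have "p \<noteq> []" using sp n by auto
    then obtain c w where cw: "p = c # w" by (cases p) auto
    have "n \<in> set (c # w)" using sp cw n by simp
    then have "n \<le> last (bpc c w)" by (rule last_bpc)
    then have "n \<le> last s" using s cw by simp
    have "s \<noteq> []" using ss n by auto
    then obtain \<gamma> y where e: "s = \<gamma> @ [y]" by (metis rev_exhaust)
    have "y \<in> {1..n}" using ss e by auto
    then have "y = n" using \<open>n \<le> last s\<close> e by simp
    have "set \<gamma> = {1..n-1}"
    proof -
      have "set \<gamma> \<union> {n} = {1..n}" using ss e \<open>y = n\<close> by simp
      moreover have "n \<notin> set \<gamma>" using ds e \<open>y = n\<close> by simp
      ultimately have "set \<gamma> = {1..n} - {n}" by blast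
      also have "\<dots> = {1..n-1}" using n by auto
      finally show ?thesis .
    qed
    moreover have "distinct \<gamma>" using ds e by simp
    ultimately have "\<gamma> \<in> permutations_of_set {1..n-1}" by (simp add: permutations_of_set_def)
    then show "s \<in> (\<lambda>\<gamma>. \<gamma> @ [n]) ` permutations_of_set {1..n-1}" using e \<open>y = n\<close> by blast
  qed
next
  show "(\<lambda>\<gamma>. \<gamma> @ [n]) ` permutations_of_set {1..n-1} \<subseteq> bp ` permutations_of_set {1..n}"
  proof
    fix s assume "s \<in> (\<lambda>\<gamma>. \<gamma> @ [n]) ` permutations_of_set {1..n-1}"
    then obtain \<gamma> where g: "\<gamma> \<in> permutations_of_set {1..n-1}" and s: "s = \<gamma> @ [n]" by blast
    from g have sg: "set \<gamma> = {1..n-1}" and dg: "distinct \<gamma>" by (simp_all add: permutations_of_set_def)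
    have lt: "\<forall>x\<in>set \<gamma>. x < n" using sg n by auto
    have d: "distinct (\<gamma> @ [n])" using dg sg n by auto
    have "Q s \<ge> 1" using Q_snoc_max[OF d lt] S_pos s by simp
    then have "{t. bp t = s} \<noteq> {}" unfolding Q_def by (metis card.empty not_one_le_zero)
    then obtain t where t: "bp t = s" by blast
    have "set t = set s" using t set_bp by metis
    also have "\<dots> = {1..n}" using s sg n by auto
    finally have "set t = {1..n}" .
    moreover have "distinct t" using t distinct_bp d s by metis
    ultimately have "t \<in> permutations_of_set {1..n}" by (simp add: permutations_of_set_def)
    then show "s \<in> bp ` permutations_of_set {1..n}" using t by blast
  qed
qed

lemma fiber:
  assumes "p \<in> permutations_of_set {1..n}"
  shows "{t \<in> permutations_of_set {1..n}. bp t = bp p} = {t. bp t = bp p}"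
proof -
  have "t \<in> permutations_of_set {1..n}" if "bp t = bp p" for t
  proof -
    have "mset t = mset (bp t)" by (rule mset_bp[symmetric])
    also have "\<dots> = mset (bp p)" using that by simp
    also have "\<dots> = mset p" by (rule mset_bp)
    finally have "mset t = mset p" .
    then have "set t = set p" by (metis set_mset_mset)
    moreover have "distinct t = distinct p" using \<open>mset t = mset p\<close> by (rule mset_eq_imp_distinct_iff)
    ultimately show ?thesis using assms by (simp add: permutations_of_set_def)
  qed
  then show ?thesis by auto
qed

theorem mainTheorem8:
  fixes n m :: nat
  assumes "n \<ge> 1" and "m \<ge> 1"
  shows "(1 / fact n) * (\<Sum>p\<in>permutations_of_set {1..n}.
            (real (card (bubble_preimage n (bubble p)))) ^ m)
         = (\<Prod>j=1..n-1. (2 ^ (m + 1) + real n - real j - 1) / (real n - real j + 1))"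
proof -
  let ?P = "permutations_of_set {1..n}"
  have "(\<Sum>p\<in>?P. (real (card (bubble_preimage n (bubble p)))) ^ m)
      = (\<Sum>p\<in>?P. real (Q (bp p)) ^ m)"
  proof (rule sum.cong)
    fix p assume p: "p \<in> ?P"
    have "bubble_preimage n (bubble p) = {t. bp t = bp p}"
      unfolding bubble_preimage_def bubble_bp using fiber[OF p] by simp
    then show "(real (card (bubble_preimage n (bubble p)))) ^ m = real (Q (bp p)) ^ m"
      by (simp add: Q_def)
  qed simp
  also have "\<dots> = (\<Sum>y\<in>bp ` ?P. \<Sum>p\<in>{x. x \<in> ?P \<and> bp x = y}. real (Q (bp p)) ^ m)"
    by (rule sum.image_gen) simp
  also have "\<dots> = (\<Sum>y\<in>bp ` ?P. real (Q y) ^ (m + 1))"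
  proof (rule sum.cong)
    fix y assume "y \<in> bp ` ?P"
    then obtain p where p: "p \<in> ?P" and y: "y = bp p" by blast
    have "{x. x \<in> ?P \<and> bp x = y} = {t. bp t = y}" using fiber[OF p] y by simp
    then have "(\<Sum>p\<in>{x. x \<in> ?P \<and> bp x = y}. real (Q (bp p)) ^ m)
        = (\<Sum>p\<in>{t. bp t = y}. real (Q y) ^ m)" by simp
    also have "\<dots> = real (Q y) * real (Q y) ^ m" by (simp add: Q_def)
    finally show "(\<Sum>p\<in>{x. x \<in> ?P \<and> bp x = y}. real (Q (bp p)) ^ m) = real (Q y) ^ (m + 1)"
      by simp
  qed simp
  also have "\<dots> = (\<Sum>y\<in>(\<lambda>\<gamma>. \<gamma> @ [n]) ` permutations_of_set {1..n-1}. real (Q y) ^ (m + 1))"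
    using image_bp[OF assms(1)] by simp
  also have "\<dots> = (\<Sum>\<gamma>\<in>permutations_of_set {1..n-1}. real (Q (\<gamma> @ [n])) ^ (m + 1))"
  proof -
    have "inj_on (\<lambda>\<gamma>. \<gamma> @ [n]) (permutations_of_set {1..n-1})" by (rule inj_onI) simp
    then show ?thesis by (simp add: sum.reindex)
  qed
  also have "\<dots> = (\<Sum>\<gamma>\<in>permutations_of_set {1..n-1}. real (S \<gamma>) ^ (m + 1))"
  proof (rule sum.cong)
    fix \<gamma> assume "\<gamma> \<in> permutations_of_set {1..n-1}"
    then have sg: "set \<gamma> = {1..n-1}" and dg: "distinct \<gamma>" by (simp_all add: permutations_of_set_def)
    have lt: "\<forall>x\<in>set \<gamma>. x < n" using sg assms(1) by auto
    have d: "distinct (\<gamma> @ [n])" using dg sg assms(1) by auto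
    show "real (Q (\<gamma> @ [n])) ^ (m + 1) = real (S \<gamma>) ^ (m + 1)" using Q_snoc_max[OF d lt] by simp
  qed simp
  also have "\<dots> = (\<Prod>i=1..n-1. 2 ^ (m + 1) + real i - 1)"
    using gen_fun[of "{1..n-1}" "m + 1"] by simp
  finally have L: "(\<Sum>p\<in>?P. (real (card (bubble_preimage n (bubble p)))) ^ m)
      = (\<Prod>i=1..n-1. 2 ^ (m + 1) + real i - 1)" .
  show ?thesis unfolding L rhs_eq[OF assms(1)] by simp
qed

end
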